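(* For every command $c$ and store $\sigma$ of the While-language: $(c,\sigma)\to^\infty$ if and only if $(c,\sigma)\Rightarrow^\infty$.
   Context: While-language syntax: variables $x$ range over a countably infinite set $\mathit{Var}$; $n$ ranges over natural numbers; values are $v ::= \mathsf{null}\mid n$ ($\mathsf{null}$ distinct from every natural number); expressions are $e ::= v\mid x\mid e_1\oplus e_2$ with $\oplus\in\{+,-,*\}$, where $\oplus(n_1,n_2)$ is the result of the operation on naturals; commands are $c ::= \mathsf{skip}\mid\mathsf{alloc}\ x\mid x:=e\mid c_1;c_2\mid \mathsf{if}\ e\ c_1\ c_2\mid\mathsf{while}\ e\ c$. A store $\sigma$ is a finite partial map from $\mathit{Var}$ to values, with domain $\mathrm{dom}(\sigma)$, lookup $\sigma(x)$, update $\sigma[x\mapsto v]$. Expression evaluation $(e,\sigma)\Rightarrow_E v$ is the least relation with: $(v,\sigma)\Rightarrow_E v$; $(x,\sigma)\Rightarrow_E\sigma(x)$ if $x\in\mathrm{dom}(\sigma)$; if $(e_1,\sigma)\Rightarrow_E n_1$ and $(e_2,\sigma)\Rightarrow_E n_2$ with $n_1,n_2$ naturals then $(e_1\oplus e_2,\sigma)\Rightarrow_E\oplus(n_1,n_2)$. Small-step relation $(c,\sigma)\to(c',\sigma')$ is the least relation with: $(\mathsf{alloc}\ x,\sigma)\to(\mathsf{skip},\sigma[x\mapsto\mathsf{null}])$ if $x\notin\mathrm{dom}(\sigma)$; $(x:=e,\sigma)\to(\mathsf{skip},\sigma[x\mapsto v])$ if $x\in\mathrm{dom}(\sigma)$ and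 $(e,\sigma)\Rightarrow_E v$; $(c_1;c_2,\sigma)\to(c_1';c_2,\sigma')$ if $(c_1,\sigma)\to(c_1',\sigma')$; $(\mathsf{skip};c_2,\sigma)\to(c_2,\sigma)$; $(\mathsf{if}\ e\ c_1\ c_2,\sigma)\to(c_1,\sigma)$ if $(e,\sigma)\Rightarrow_E v$, $v\neq 0$; $(\mathsf{if}\ e\ c_1\ c_2,\sigma)\to(c_2,\sigma)$ if $(e,\sigma)\Rightarrow_E 0$; $(\mathsf{while}\ e\ c,\sigma)\to(c;\mathsf{while}\ e\ c,\sigma)$ if $(e,\sigma)\Rightarrow_E v$, $v\neq0$; $(\mathsf{while}\ e\ c,\sigma)\to(\mathsf{skip},\sigma)$ if $(e,\sigma)\Rightarrow_E 0$. The predicate $(c,\sigma)\to^\infty$ is coinductively defined (greatest predicate) by the single rule: if $(c,\sigma)\to(c',\sigma')$ and $(c',\sigma')\to^\infty$ then $(c,\sigma)\to^\infty$; i.e. it holds exactly when there is an infinite sequence of transitions from $(c,\sigma)$. Big-step relation $(c,\sigma)\Rightarrow_B\sigma'$ is the least relation with: $(\mathsf{skip},\sigma)\Rightarrow_B\sigma$; $(\mathsf{alloc}\ x,\sigma)\Rightarrow_B\sigma[x\mapsto\mathsf{null}]$ if $x\notin\mathrm{dom}(\sigma)$; $(x:=e,\sigma)\Rightarrow_B\sigma[x\mapsto v]$ if $x\in\mathrm{dom}(\sigma)$ and $(e,\sigma)\Rightarrow_E v$; $(c_1;c_2,\sigma)\Rightarrow_B\sigma''$ if $(c_1,\sigma)\Rightarrow_B\sigma'$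 and $(c_2,\sigma')\Rightarrow_B\sigma''$; $(\mathsf{if}\ e\ c_1\ c_2,\sigma)\Rightarrow_B\sigma'$ if $(e,\sigma)\Rightarrow_E v$, $v\ne0$, $(c_1,\sigma)\Rightarrow_B\sigma'$; $(\mathsf{if}\ e\ c_1\ c_2,\sigma)\Rightarrow_B\sigma'$ if $(e,\sigma)\Rightarrow_E0$, $(c_2,\sigma)\Rightarrow_B\sigma'$; $(\mathsf{while}\ e\ c,\sigma)\Rightarrow_B\sigma''$ if $(e,\sigma)\Rightarrow_E v$, $v\ne0$, $(c,\sigma)\Rightarrow_B\sigma'$, $(\mathsf{while}\ e\ c,\sigma')\Rightarrow_B\sigma''$; $(\mathsf{while}\ e\ c,\sigma)\Rightarrow_B\sigma$ if $(e,\sigma)\Rightarrow_E0$. The big-step divergence predicate $(c,\sigma)\Rightarrow^\infty$ is the greatest predicate such that every element is the conclusion of an instance of one of these rules whose $\Rightarrow^\infty$-premises are in it: (D-Seq1) $(c_1,\sigma)\Rightarrow^\infty$ gives $(c_1;c_2,\sigma)\Rightarrow^\infty$; (D-Seq2) $(c_1,\sigma)\Rightarrow_B\sigma'$ and $(c_2,\sigma')\Rightarrow^\infty$ give $(c_1;c_2,\sigma)\Rightarrow^\infty$; (D-If) $(e,\sigma)\Rightarrow_E v$, $v\ne0$, $(c_1,\sigma)\Rightarrow^\infty$ give $(\mathsf{if}\ e\ c_1\ c_2,\sigma)\Rightarrow^\infty$; (D-IfZ) $(e,\sigma)\Rightarrow_E0$, $(c_2,\sigma)\Rightarrow^\infty$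 give $(\mathsf{if}\ e\ c_1\ c_2,\sigma)\Rightarrow^\infty$; (D-WhileBody) $(e,\sigma)\Rightarrow_E v$, $v\ne0$, $(c,\sigma)\Rightarrow^\infty$ give $(\mathsf{while}\ e\ c,\sigma)\Rightarrow^\infty$; (D-While) $(e,\sigma)\Rightarrow_E v$, $v\ne0$, $(c,\sigma)\Rightarrow_B\sigma'$, $(\mathsf{while}\ e\ c,\sigma')\Rightarrow^\infty$ give $(\mathsf{while}\ e\ c,\sigma)\Rightarrow^\infty$. *)

theory Defs
  imports Main
begin

type_synonym var = string

datatype val = Null | N nat

datatype binop = Plus | Minus | Times

datatype exp = V val | X var | Op binop exp exp

datatype com = Skip | Alloc var | Assign var exp | Seq com com
  | If exp com com | While exp com

(* stores: partial maps Var -> val; "store" in the paper additionally means finite domain *)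
type_synonym store = "var \<Rightarrow> val option"

fun opsem :: "binop \<Rightarrow> nat \<Rightarrow> nat \<Rightarrow> nat" where
  "opsem Plus a b = a + b"
| "opsem Minus a b = a - b"
| "opsem Times a b = a * b"

inductive eval :: "exp \<Rightarrow> store \<Rightarrow> val \<Rightarrow> bool" where
  EVal: "eval (V v) \<sigma> v"
| EVar: "\<sigma> x = Some v \<Longrightarrow> eval (X x) \<sigma> v"
| EOp: "eval e1 \<sigma> (N n1) \<Longrightarrow> eval e2 \<sigma> (N n2) \<Longrightarrow> eval (Op f e1 e2) \<sigma> (N (opsem f n1 n2))"

inductive step :: "com \<Rightarrow> store \<Rightarrow> com \<Rightarrow> store \<Rightarrow> bool" where
  SAlloc: "x \<notin> dom \<sigma> \<Longrightarrow> step (Alloc x) \<sigma> Skip (\<sigma>(x \<mapsto> Null))"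
| SAssign: "x \<in> dom \<sigma> \<Longrightarrow> eval e \<sigma> v \<Longrightarrow> step (Assign x e) \<sigma> Skip (\<sigma>(x \<mapsto> v))"
| SSeq: "step c1 \<sigma> c1' \<sigma>' \<Longrightarrow> step (Seq c1 c2) \<sigma> (Seq c1' c2) \<sigma>'"
| SSeqSkip: "step (Seq Skip c2) \<sigma> c2 \<sigma>"
| SIf: "eval e \<sigma> v \<Longrightarrow> v \<noteq> N 0 \<Longrightarrow> step (If e c1 c2) \<sigma> c1 \<sigma>"
| SIfZ: "eval e \<sigma> (N 0) \<Longrightarrow> step (If e c1 c2) \<sigma> c2 \<sigma>"
| SWhile: "eval e \<sigma> v \<Longrightarrow> v \<noteq> N 0 \<Longrightarrow> step (While e c) \<sigma> (Seq c (While e c)) \<sigma>"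
| SWhileZ: "eval e \<sigma> (N 0) \<Longrightarrow> step (While e c) \<sigma> Skip \<sigma>"

coinductive sdiv :: "com \<Rightarrow> store \<Rightarrow> bool" where
  "step c \<sigma> c' \<sigma>' \<Longrightarrow> sdiv c' \<sigma>' \<Longrightarrow> sdiv c \<sigma>"

inductive big :: "com \<Rightarrow> store \<Rightarrow> store \<Rightarrow> bool" where
  BSkip: "big Skip \<sigma> \<sigma>"
| BAlloc: "x \<notin> dom \<sigma> \<Longrightarrow> big (Alloc x) \<sigma> (\<sigma>(x \<mapsto> Null))"
| BAssign: "x \<in> dom \<sigma> \<Longrightarrow> eval e \<sigma> v \<Longrightarrow> big (Assign x e) \<sigma> (\<sigma>(x \<mapsto> v))"
| BSeq: "big c1 \<sigma> \<sigma>' \<Longrightarrow> big c2 \<sigma>' \<sigma>'' \<Longrightarrow> big (Seq c1 c2) \<sigma> \<sigma>''"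
| BIf: "eval e \<sigma> v \<Longrightarrow> v \<noteq> N 0 \<Longrightarrow> big c1 \<sigma> \<sigma>' \<Longrightarrow> big (If e c1 c2) \<sigma> \<sigma>'"
| BIfZ: "eval e \<sigma> (N 0) \<Longrightarrow> big c2 \<sigma> \<sigma>' \<Longrightarrow> big (If e c1 c2) \<sigma> \<sigma>'"
| BWhile: "eval e \<sigma> v \<Longrightarrow> v \<noteq> N 0 \<Longrightarrow> big c \<sigma> \<sigma>' \<Longrightarrow> big (While e c) \<sigma>' \<sigma>''
           \<Longrightarrow> big (While e c) \<sigma> \<sigma>''"
| BWhileZ: "eval e \<sigma> (N 0) \<Longrightarrow> big (While e c) \<sigma> \<sigma>"

coinductive bdiv :: "com \<Rightarrow> store \<Rightarrow> bool" where
  DSeq1: "bdiv c1 \<sigma> \<Longrightarrow> bdiv (Seq c1 c2) \<sigma>"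
| DSeq2: "big c1 \<sigma> \<sigma>' \<Longrightarrow> bdiv c2 \<sigma>' \<Longrightarrow> bdiv (Seq c1 c2) \<sigma>"
| DIf: "eval e \<sigma> v \<Longrightarrow> v \<noteq> N 0 \<Longrightarrow> bdiv c1 \<sigma> \<Longrightarrow> bdiv (If e c1 c2) \<sigma>"
| DIfZ: "eval e \<sigma> (N 0) \<Longrightarrow> bdiv c2 \<sigma> \<Longrightarrow> bdiv (If e c1 c2) \<sigma>"
| DWhileBody: "eval e \<sigma> v \<Longrightarrow> v \<noteq> N 0 \<Longrightarrow> bdiv c \<sigma> \<Longrightarrow> bdiv (While e c) \<sigma>"
| DWhile: "eval e \<sigma> v \<Longrightarrow> v \<noteq> N 0 \<Longrightarrow> big c \<sigma> \<sigma>' \<Longrightarrow> bdiv (While e c) \<sigma>'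
           \<Longrightarrow> bdiv (While e c) \<sigma>"

end

theory Submission
  imports Defs
begin

inductive star :: "com \<Rightarrow> store \<Rightarrow> com \<Rightarrow> store \<Rightarrow> bool" where
  refl: "star c s c s"
| stp: "step c s c' s' \<Longrightarrow> star c' s' c'' s'' \<Longrightarrow> star c s c'' s''"

lemma big_skip: "big Skip s t \<Longrightarrow> t = s"
  by (cases rule: big.cases) auto

lemma step_big: "step c s c' s' \<Longrightarrow> big c' s' s'' \<Longrightarrow> big c s s''"
proof (induction arbitrary: s'' rule: step.induct)
  case (SAlloc x \<sigma>)
  then have "s'' = \<sigma>(x \<mapsto> Null)" using big_skip by blast
  then show ?case using big.BAlloc[OF SAlloc.hyps] by (simp only:)
next
  case (SAssign x \<sigma> e v)
  then have "s'' = \<sigma>(x \<mapsto> v)" using big_skip by blast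
  then show ?case using big.BAssign[OF SAssign.hyps] by (simp only:)
next
  case (SSeq c1 \<sigma> c1' \<sigma>' c2)
  from SSeq.prems obtain t where "big c1' \<sigma>' t" "big c2 t s''" by (auto elim: big.cases)
  then show ?case using SSeq.IH by (auto intro: big.intros)
next
  case (SSeqSkip c2 \<sigma>) then show ?case by (auto intro: big.intros)
next
  case (SIf e \<sigma> v c1 c2) then show ?case by (auto intro: big.intros)
next
  case (SIfZ e \<sigma> c1 c2) then show ?case by (auto intro: big.intros)
next
  case (SWhile e \<sigma> v c)
  from SWhile.prems obtain t where "big c \<sigma> t" "big (While e c) t s''" by (auto elim: big.cases)
  then show ?case using SWhile by (auto intro: big.intros)
next
  case (SWhileZ e \<sigma> c) then show ?case by (auto elim: big.cases intro: big.intros)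
qed

lemma star_big: "star c s c' s' \<Longrightarrow> c' = Skip \<Longrightarrow> big c s s'"
  by (induction rule: star.induct) (auto intro: big.intros step_big)

lemma big_step: "big c s s' \<Longrightarrow> (c = Skip \<and> s' = s) \<or> (\<exists>c'' s''. step c s c'' s'' \<and> big c'' s'' s')"
proof (induction rule: big.induct)
  case (BSeq c1 \<sigma> \<sigma>' c2 \<sigma>'')
  then show ?case by (auto intro: step.intros big.intros)
qed (blast intro: step.intros big.intros)+

lemma no_sdiv_skip: "\<not> sdiv Skip s"
  by (auto elim: sdiv.cases step.cases)

lemma seq_split:
  assumes "sdiv (Seq c1 c2) s" "\<not> (\<exists>s'. star c1 s Skip s' \<and> sdiv c2 s')"
  shows "sdiv c1 s"
proof -
  have "\<exists>c2. sdiv (Seq c1 c2) s \<and> \<not> (\<exists>s'. star c1 s Skip s' \<and> sdiv c2 s')"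
    using assms by blast
  then show ?thesis
  proof (coinduction arbitrary: c1 s rule: sdiv.coinduct)
    case (sdiv c1 s)
    then obtain c2 where h: "sdiv (Seq c1 c2) s" "\<not> (\<exists>s'. star c1 s Skip s' \<and> sdiv c2 s')" by blast
    from h(1) obtain c' s'' where st: "step (Seq c1 c2) s c' s''" "sdiv c' s''" by (auto elim: sdiv.cases)
    from st(1) show ?case
    proof (cases rule: step.cases)
      case (SSeq c1')
      have "\<not> (\<exists>s'. star c1' s'' Skip s' \<and> sdiv c2 s')"
        using h(2) SSeq by (auto intro: star.stp)
      then show ?thesis using SSeq st(2) by blast
    next
      case SSeqSkip
      then show ?thesis using h(2) st(2) by (auto intro: star.refl)
    qed
  qed
qed

lemma seq_cases:
  assumes "sdiv (Seq c1 c2) s"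
  shows "sdiv c1 s \<or> (\<exists>s'. big c1 s s' \<and> sdiv c2 s')"
  using seq_split[OF assms] star_big by blast

lemma sdiv_bdiv: "sdiv c s \<Longrightarrow> bdiv c s"
proof (coinduction arbitrary: c s rule: bdiv.coinduct)
  case (bdiv c s)
  then obtain c' s' where st: "step c s c' s'" "sdiv c' s'" by (auto elim: sdiv.cases)
  show ?case
  proof (cases c)
    case (Seq c1 c2)
    then have "sdiv c1 s \<or> (\<exists>s'. big c1 s s' \<and> sdiv c2 s')" using seq_cases bdiv by blast
    then show ?thesis
    proof
      assume "sdiv c1 s" then show ?thesis using Seq by auto
    next
      assume "\<exists>s'. big c1 s s' \<and> sdiv c2 s'"
      then obtain t where "big c1 s t" "sdiv c2 t" by blast
      then show ?thesis using Seq by auto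
    qed
  next
    case (If e c1 c2)
    then show ?thesis using st by (auto elim: step.cases)
  next
    case (While e b)
    from st(1)[unfolded While] show ?thesis
    proof (cases rule: step.cases)
      case (SWhile v)
      then have "sdiv (Seq b (While e b)) s" using st(2) While by simp
      then have "sdiv b s \<or> (\<exists>s'. big b s s' \<and> sdiv (While e b) s')" using seq_cases by blast
      then show ?thesis
      proof
        assume "sdiv b s" then show ?thesis using SWhile While by auto
      next
        assume "\<exists>s'. big b s s' \<and> sdiv (While e b) s'"
        then obtain t where "big b s t" "sdiv (While e b) t" by blast
        then show ?thesis using SWhile While by auto
      qed
    next
      case SWhileZ then show ?thesis using st(2) no_sdiv_skip by simp
    qed
  qed (use st no_sdiv_skip in \<open>auto elim: step.cases\<close>)
qed

lemma bdiv_step: "bdiv c s \<Longrightarrow> \<exists>c' s'. step c s c' s' \<and> bdiv c' s'"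
proof (induction c arbitrary: s)
  case (Seq c1 c2)
  from Seq.prems show ?case
  proof (cases rule: bdiv.cases)
    case DSeq1
    then show ?thesis using Seq.IH(1) by (blast intro: step.intros bdiv.intros)
  next
    case (DSeq2 s')
    from big_step[OF DSeq2(1)] show ?thesis
    proof
      assume "c1 = Skip \<and> s' = s" then show ?thesis using DSeq2 by (blast intro: step.intros)
    next
      assume "\<exists>c'' s''. step c1 s c'' s'' \<and> big c'' s'' s'"
      then show ?thesis using DSeq2 by (blast intro: step.intros bdiv.intros)
    qed
  qed
next
  case (If e c1 c2)
  from If.prems show ?case by (cases rule: bdiv.cases) (blast intro: step.intros)+
next
  case (While e b)
  from While.prems show ?case by (cases rule: bdiv.cases) (blast intro: step.intros bdiv.intros)+
qed (auto elim: bdiv.cases)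

lemma bdiv_sdiv: "bdiv c s \<Longrightarrow> sdiv c s"
proof (coinduction arbitrary: c s rule: sdiv.coinduct)
  case (sdiv c s) then show ?case using bdiv_step by blast
qed

theorem theorem5:
  fixes c :: com and \<sigma> :: store
  assumes "finite (dom \<sigma>)"
  shows "sdiv c \<sigma> \<longleftrightarrow> bdiv c \<sigma>"
  using sdiv_bdiv bdiv_sdiv by blast

end
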